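(* In the game $\mathrm{CN}(7,4)$, if $\mathbf p\in S$ and $\mathbf p'$ is obtained from $\mathbf p$ by a legal move, then $\mathbf p'\notin S$. Here $S=S_1\cup S_2\cup S_3\cup S_4$ where, writing a position as $(a,b,c,d,e,f,g)$ with $a$ a minimum entry, $S_1=\{a=b=0,\ c=g>0,\ d+e+f=c\}$, $S_2=\{a=b=c=d=e=f=g\}$, $S_3=\{a=b,\ c=g,\ d=f,\ a+c=d+e,\ 0<a<e\}$, $S_4=\{a=f,\ b+c=d+e=g+a,\ a<\min\{b,e\},\ a<\max\{c,d\}\}$.
   Context: Circular Nim $\mathrm{CN}(7,4)$: $7$ stacks of tokens are arranged in a circle; a position is a vector $(p_1,\dots,p_7)$ of nonnegative integers giving the stack heights in order around the circle, determined only up to rotation and reflection. A legal move consists of choosing $4$ cyclically consecutive stacks and removing at least one token from at least one of these $4$ stacks (any number from each chosen stack; other stacks unchanged). A position belongs to $S_i$ if some rotation and/or reflection $(a,b,c,d,e,f,g)$ of it with $a$ equal to the minimum entry satisfies the conditions defining $S_i$. *)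

theory Defs
  imports Main
begin

text \<open>A position of CN(7,4) is a list of 7 stack heights, read cyclically.
  Positions are considered up to rotation and reflection.\<close>

definition is_position :: "nat list \<Rightarrow> bool" where
  "is_position p \<longleftrightarrow> length p = 7"

definition dihedral_images :: "nat list \<Rightarrow> nat list set" where
  "dihedral_images p = {rotate k p | k. k < 7} \<union> {rev (rotate k p) | k. k < 7}"

definition S1 :: "nat list \<Rightarrow> bool" where
  "S1 q \<longleftrightarrow> (let a = q!0; b = q!1; c = q!2; d = q!3; e = q!4; f = q!5; g = q!6 in
     a = 0 \<and> b = 0 \<and> c = g \<and> c > 0 \<and> d + e + f = c)"

definition S2 :: "nat list \<Rightarrow> bool" where
  "S2 q \<longleftrightarrow> (let a = q!0; b = q!1; c = q!2; d = q!3; e = q!4; f = q!5; g = q!6 in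
     a = b \<and> b = c \<and> c = d \<and> d = e \<and> e = f \<and> f = g)"

definition S3 :: "nat list \<Rightarrow> bool" where
  "S3 q \<longleftrightarrow> (let a = q!0; b = q!1; c = q!2; d = q!3; e = q!4; f = q!5; g = q!6 in
     a = b \<and> c = g \<and> d = f \<and> a + c = d + e \<and> 0 < a \<and> a < e)"

definition S4 :: "nat list \<Rightarrow> bool" where
  "S4 q \<longleftrightarrow> (let a = q!0; b = q!1; c = q!2; d = q!3; e = q!4; f = q!5; g = q!6 in
     a = f \<and> b + c = d + e \<and> d + e = g + a \<and> a < min b e \<and> a < max c d)"

definition in_S :: "nat list \<Rightarrow> bool" where
  "in_S p \<longleftrightarrow> (\<exists>q \<in> dihedral_images p. q!0 = Min (set q) \<and>
                   (S1 q \<or> S2 q \<or> S3 q \<or> S4 q))"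

definition window :: "nat \<Rightarrow> nat set" where
  "window i = {(i + k) mod 7 | k. k < 4}"

definition legal_move :: "nat list \<Rightarrow> nat list \<Rightarrow> bool" where
  "legal_move p p' \<longleftrightarrow> length p = 7 \<and> length p' = 7 \<and>
     (\<exists>i < 7. (\<forall>j < 7. j \<notin> window i \<longrightarrow> p' ! j = p ! j) \<and>
              (\<forall>j < 7. p' ! j \<le> p ! j) \<and> p' \<noteq> p)"

end

theory Submission imports Defs begin

lemma k7: "(k::nat) < 7 \<longleftrightarrow> k = 0 \<or> k = 1 \<or> k = 2 \<or> k = 3 \<or> k = 4 \<or> k = 5 \<or> k = 6" by auto
lemma k4: "(k::nat) < 4 \<longleftrightarrow> k = 0 \<or> k = 1 \<or> k = 2 \<or> k = 3" by auto
lemma rot_unfold: "{rotate k p | k. k < 7} = {rotate 0 p, rotate 1 p, rotate 2 p, rotate 3 p, rotate 4 p, rotate 5 p, rotate 6 p}"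
  unfolding k7 by blast
lemma rrot_unfold: "{rev (rotate k p) | k. k < 7} = {rev (rotate 0 p), rev (rotate 1 p), rev (rotate 2 p), rev (rotate 3 p), rev (rotate 4 p), rev (rotate 5 p), rev (rotate 6 p)}"
  unfolding k7 by blast

lemma dih: "dihedral_images [a,b,c,d,e,f,g] = {[g,f,e,d,c,b,a],[a,g,f,e,d,c,b],[b,a,g,f,e,d,c],[c,b,a,g,f,e,d],[d,c,b,a,g,f,e],[e,d,c,b,a,g,f],[f,e,d,c,b,a,g],[a,b,c,d,e,f,g],[b,c,d,e,f,g,a],[c,d,e,f,g,a,b],[d,e,f,g,a,b,c],[e,f,g,a,b,c,d],[f,g,a,b,c,d,e],[g,a,b,c,d,e,f]}"
  unfolding dihedral_images_def rot_unfold rrot_unfold by (simp add: numeral_eq_Suc)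
lemma set4: "{F k | k. k = (0::nat) \<or> k = 1 \<or> k = 2 \<or> k = 3} = {F 0, F 1, F 2, F 3}" by blast
lemma win: "window i = {i mod 7, (i+1) mod 7, (i+2) mod 7, (i+3) mod 7}"
  unfolding window_def k4 using set4[of "\<lambda>k. (i+k) mod 7"] by simp
lemma Min_ins: "finite A \<Longrightarrow> (x = Min (insert x A)) \<longleftrightarrow> (\<forall>y\<in>A. x \<le> (y::nat))"
  by (metis Min.boundedI Min.coboundedI Min_insert2 finite_insert insertCI le_antisym order_refl)

definition TT :: "nat \<Rightarrow> nat \<Rightarrow> nat \<Rightarrow> nat \<Rightarrow> nat \<Rightarrow> nat \<Rightarrow> nat \<Rightarrow> bool" where
  "TT a b c d e f g \<longleftrightarrow> a \<le> b \<and> a \<le> c \<and> a \<le> d \<and> a \<le> e \<and> a \<le> f \<and> a \<le> g \<and>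
    ((a = 0 \<and> b = 0 \<and> c = g \<and> 0 < c \<and> d + e + f = c) \<or>
     (a = b \<and> b = c \<and> c = d \<and> d = e \<and> e = f \<and> f = g) \<or>
     (a = b \<and> c = g \<and> d = f \<and> a + c = d + e \<and> 0 < a \<and> a < e) \<or>
     (a = f \<and> b + c = d + e \<and> d + e = g + a \<and> a < b \<and> a < e \<and> (a < c \<or> a < d)))"

lemma TT_iff: "([a,b,c,d,e,f,g]!0 = Min (set [a,b,c,d,e,f,g]) \<and> (S1 [a,b,c,d,e,f,g] \<or> S2 [a,b,c,d,e,f,g] \<or> S3 [a,b,c,d,e,f,g] \<or> S4 [a,b,c,d,e,f,g]))
   \<longleftrightarrow> TT a b c d e f g"
  unfolding TT_def S1_def S2_def S3_def S4_def Let_def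
  by (simp add: Min_ins del: Min_insert) linarith

definition MV :: "nat \<Rightarrow> nat \<Rightarrow> nat \<Rightarrow> nat \<Rightarrow> nat \<Rightarrow> nat \<Rightarrow> nat \<Rightarrow> nat \<Rightarrow> nat \<Rightarrow> nat \<Rightarrow> nat \<Rightarrow> nat \<Rightarrow> nat \<Rightarrow> nat \<Rightarrow> bool" where
  "MV a b c d e f g a' b' c' d' e' f' g' \<longleftrightarrow> a' \<le> a \<and> b' \<le> b \<and> c' \<le> c \<and> d' \<le> d \<and> e' \<le> e \<and> f' \<le> f \<and> g' \<le> g \<and> a'+b'+c'+d'+e'+f'+g' < a+b+c+d+e+f+g \<and> ((e' = e \<and> f' = f \<and> g' = g) \<or> (a' = a \<and> f' = f \<and> g' = g) \<or> (a' = a \<and> b' = b \<and> g' = g) \<or> (a' = a \<and> b' = b \<and> c' = c) \<or> (b' = b \<and> c' = c \<and> d' = d) \<or> (c' = c \<and> d' = d \<and> e' = e) \<or> (d' = d \<and> e' = e \<and> f' = f))"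
definition IS :: "nat \<Rightarrow> nat \<Rightarrow> nat \<Rightarrow> nat \<Rightarrow> nat \<Rightarrow> nat \<Rightarrow> nat \<Rightarrow> bool" where
  "IS a b c d e f g \<longleftrightarrow> TT a b c d e f g \<or> TT b c d e f g a \<or> TT c d e f g a b \<or> TT d e f g a b c \<or> TT e f g a b c d \<or> TT f g a b c d e \<or> TT g a b c d e f \<or> TT g f e d c b a \<or> TT a g f e d c b \<or> TT b a g f e d c \<or> TT c b a g f e d \<or> TT d c b a g f e \<or> TT e d c b a g f \<or> TT f e d c b a g"

lemma inS_iff: "in_S [a,b,c,d,e,f,g] \<longleftrightarrow> IS a b c d e f g"
  unfolding in_S_def dih IS_def by (simp only: bex_simps insert_iff TT_iff) blast

lemma core0: "TT a b c d e f g \<Longrightarrow> MV a b c d e f g a' b' c' d' e' f' g' \<Longrightarrow> TT a' b' c' d' e' f' g' \<Longrightarrow> False"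
  unfolding TT_def MV_def by (elim conjE disjE; linarith)
lemma core1: "TT a b c d e f g \<Longrightarrow> MV a b c d e f g a' b' c' d' e' f' g' \<Longrightarrow> TT b' c' d' e' f' g' a' \<Longrightarrow> False"
  unfolding TT_def MV_def by (elim conjE disjE; linarith)
lemma core2: "TT a b c d e f g \<Longrightarrow> MV a b c d e f g a' b' c' d' e' f' g' \<Longrightarrow> TT c' d' e' f' g' a' b' \<Longrightarrow> False"
  unfolding TT_def MV_def by (elim conjE disjE; linarith)
lemma core3: "TT a b c d e f g \<Longrightarrow> MV a b c d e f g a' b' c' d' e' f' g' \<Longrightarrow> TT d' e' f' g' a' b' c' \<Longrightarrow> False"
  unfolding TT_def MV_def by (elim conjE disjE; linarith)
lemma core4: "TT a b c d e f g \<Longrightarrow> MV a b c d e f g a' b' c' d' e' f' g' \<Longrightarrow> TT e' f' g' a' b' c' d' \<Longrightarrow> False"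
  unfolding TT_def MV_def by (elim conjE disjE; linarith)
lemma core5: "TT a b c d e f g \<Longrightarrow> MV a b c d e f g a' b' c' d' e' f' g' \<Longrightarrow> TT f' g' a' b' c' d' e' \<Longrightarrow> False"
  unfolding TT_def MV_def by (elim conjE disjE; linarith)
lemma core6: "TT a b c d e f g \<Longrightarrow> MV a b c d e f g a' b' c' d' e' f' g' \<Longrightarrow> TT g' a' b' c' d' e' f' \<Longrightarrow> False"
  unfolding TT_def MV_def by (elim conjE disjE; linarith)
lemma core7: "TT a b c d e f g \<Longrightarrow> MV a b c d e f g a' b' c' d' e' f' g' \<Longrightarrow> TT g' f' e' d' c' b' a' \<Longrightarrow> False"
  unfolding TT_def MV_def by (elim conjE disjE; linarith)
lemma core8: "TT a b c d e f g \<Longrightarrow> MV a b c d e f g a' b' c' d' e' f' g' \<Longrightarrow> TT a' g' f' e' d' c' b' \<Longrightarrow> False"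
  unfolding TT_def MV_def by (elim conjE disjE; linarith)
lemma core9: "TT a b c d e f g \<Longrightarrow> MV a b c d e f g a' b' c' d' e' f' g' \<Longrightarrow> TT b' a' g' f' e' d' c' \<Longrightarrow> False"
  unfolding TT_def MV_def by (elim conjE disjE; linarith)
lemma core10: "TT a b c d e f g \<Longrightarrow> MV a b c d e f g a' b' c' d' e' f' g' \<Longrightarrow> TT c' b' a' g' f' e' d' \<Longrightarrow> False"
  unfolding TT_def MV_def by (elim conjE disjE; linarith)
lemma core11: "TT a b c d e f g \<Longrightarrow> MV a b c d e f g a' b' c' d' e' f' g' \<Longrightarrow> TT d' c' b' a' g' f' e' \<Longrightarrow> False"
  unfolding TT_def MV_def by (elim conjE disjE; linarith)
lemma core12: "TT a b c d e f g \<Longrightarrow> MV a b c d e f g a' b' c' d' e' f' g' \<Longrightarrow> TT e' d' c' b' a' g' f' \<Longrightarrow> False"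
  unfolding TT_def MV_def by (elim conjE disjE; linarith)
lemma core13: "TT a b c d e f g \<Longrightarrow> MV a b c d e f g a' b' c' d' e' f' g' \<Longrightarrow> TT f' e' d' c' b' a' g' \<Longrightarrow> False"
  unfolding TT_def MV_def by (elim conjE disjE; linarith)
lemma core: "TT a b c d e f g \<Longrightarrow> MV a b c d e f g a' b' c' d' e' f' g' \<Longrightarrow> IS a' b' c' d' e' f' g' \<Longrightarrow> False"
  unfolding IS_def apply (elim disjE)
  subgoal by (erule core0; assumption)
  subgoal by (erule core1; assumption)
  subgoal by (erule core2; assumption)
  subgoal by (erule core3; assumption)
  subgoal by (erule core4; assumption)
  subgoal by (erule core5; assumption)
  subgoal by (erule core6; assumption)
  subgoal by (erule core7; assumption)
  subgoal by (erule core8; assumption)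
  subgoal by (erule core9; assumption)
  subgoal by (erule core10; assumption)
  subgoal by (erule core11; assumption)
  subgoal by (erule core12; assumption)
  subgoal by (erule core13; assumption)
  done
lemma MV0: "MV a b c d e f g a' b' c' d' e' f' g' \<Longrightarrow> MV a b c d e f g a' b' c' d' e' f' g'"
  unfolding MV_def by (simp only: ac_simps; blast)
lemma IS0: "IS a' b' c' d' e' f' g' \<Longrightarrow> IS a' b' c' d' e' f' g'"
  unfolding IS_def by (elim disjE) simp_all
lemma MV1: "MV a b c d e f g a' b' c' d' e' f' g' \<Longrightarrow> MV b c d e f g a b' c' d' e' f' g' a'"
  unfolding MV_def by (simp only: ac_simps; blast)
lemma IS1: "IS a' b' c' d' e' f' g' \<Longrightarrow> IS b' c' d' e' f' g' a'"
  unfolding IS_def by (elim disjE) simp_all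
lemma MV2: "MV a b c d e f g a' b' c' d' e' f' g' \<Longrightarrow> MV c d e f g a b c' d' e' f' g' a' b'"
  unfolding MV_def by (simp only: ac_simps; blast)
lemma IS2: "IS a' b' c' d' e' f' g' \<Longrightarrow> IS c' d' e' f' g' a' b'"
  unfolding IS_def by (elim disjE) simp_all
lemma MV3: "MV a b c d e f g a' b' c' d' e' f' g' \<Longrightarrow> MV d e f g a b c d' e' f' g' a' b' c'"
  unfolding MV_def by (simp only: ac_simps; blast)
lemma IS3: "IS a' b' c' d' e' f' g' \<Longrightarrow> IS d' e' f' g' a' b' c'"
  unfolding IS_def by (elim disjE) simp_all
lemma MV4: "MV a b c d e f g a' b' c' d' e' f' g' \<Longrightarrow> MV e f g a b c d e' f' g' a' b' c' d'"
  unfolding MV_def by (simp only: ac_simps; blast)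
lemma IS4: "IS a' b' c' d' e' f' g' \<Longrightarrow> IS e' f' g' a' b' c' d'"
  unfolding IS_def by (elim disjE) simp_all
lemma MV5: "MV a b c d e f g a' b' c' d' e' f' g' \<Longrightarrow> MV f g a b c d e f' g' a' b' c' d' e'"
  unfolding MV_def by (simp only: ac_simps; blast)
lemma IS5: "IS a' b' c' d' e' f' g' \<Longrightarrow> IS f' g' a' b' c' d' e'"
  unfolding IS_def by (elim disjE) simp_all
lemma MV6: "MV a b c d e f g a' b' c' d' e' f' g' \<Longrightarrow> MV g a b c d e f g' a' b' c' d' e' f'"
  unfolding MV_def by (simp only: ac_simps; blast)
lemma IS6: "IS a' b' c' d' e' f' g' \<Longrightarrow> IS g' a' b' c' d' e' f'"
  unfolding IS_def by (elim disjE) simp_all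
lemma MV7: "MV a b c d e f g a' b' c' d' e' f' g' \<Longrightarrow> MV g f e d c b a g' f' e' d' c' b' a'"
  unfolding MV_def by (simp only: ac_simps; blast)
lemma IS7: "IS a' b' c' d' e' f' g' \<Longrightarrow> IS g' f' e' d' c' b' a'"
  unfolding IS_def by (elim disjE) simp_all
lemma MV8: "MV a b c d e f g a' b' c' d' e' f' g' \<Longrightarrow> MV a g f e d c b a' g' f' e' d' c' b'"
  unfolding MV_def by (simp only: ac_simps; blast)
lemma IS8: "IS a' b' c' d' e' f' g' \<Longrightarrow> IS a' g' f' e' d' c' b'"
  unfolding IS_def by (elim disjE) simp_all
lemma MV9: "MV a b c d e f g a' b' c' d' e' f' g' \<Longrightarrow> MV b a g f e d c b' a' g' f' e' d' c'"
  unfolding MV_def by (simp only: ac_simps; blast)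
lemma IS9: "IS a' b' c' d' e' f' g' \<Longrightarrow> IS b' a' g' f' e' d' c'"
  unfolding IS_def by (elim disjE) simp_all
lemma MV10: "MV a b c d e f g a' b' c' d' e' f' g' \<Longrightarrow> MV c b a g f e d c' b' a' g' f' e' d'"
  unfolding MV_def by (simp only: ac_simps; blast)
lemma IS10: "IS a' b' c' d' e' f' g' \<Longrightarrow> IS c' b' a' g' f' e' d'"
  unfolding IS_def by (elim disjE) simp_all
lemma MV11: "MV a b c d e f g a' b' c' d' e' f' g' \<Longrightarrow> MV d c b a g f e d' c' b' a' g' f' e'"
  unfolding MV_def by (simp only: ac_simps; blast)
lemma IS11: "IS a' b' c' d' e' f' g' \<Longrightarrow> IS d' c' b' a' g' f' e'"
  unfolding IS_def by (elim disjE) simp_all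
lemma MV12: "MV a b c d e f g a' b' c' d' e' f' g' \<Longrightarrow> MV e d c b a g f e' d' c' b' a' g' f'"
  unfolding MV_def by (simp only: ac_simps; blast)
lemma IS12: "IS a' b' c' d' e' f' g' \<Longrightarrow> IS e' d' c' b' a' g' f'"
  unfolding IS_def by (elim disjE) simp_all
lemma MV13: "MV a b c d e f g a' b' c' d' e' f' g' \<Longrightarrow> MV f e d c b a g f' e' d' c' b' a' g'"
  unfolding MV_def by (simp only: ac_simps; blast)
lemma IS13: "IS a' b' c' d' e' f' g' \<Longrightarrow> IS f' e' d' c' b' a' g'"
  unfolding IS_def by (elim disjE) simp_all
lemma main7: assumes "IS a b c d e f g" "MV a b c d e f g a' b' c' d' e' f' g'" "IS a' b' c' d' e' f' g'" shows False
  using assms(1) unfolding IS_def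
  apply (elim disjE)
  subgoal by (erule core[OF _ MV0[OF assms(2)] IS0[OF assms(3)]])
  subgoal by (erule core[OF _ MV1[OF assms(2)] IS1[OF assms(3)]])
  subgoal by (erule core[OF _ MV2[OF assms(2)] IS2[OF assms(3)]])
  subgoal by (erule core[OF _ MV3[OF assms(2)] IS3[OF assms(3)]])
  subgoal by (erule core[OF _ MV4[OF assms(2)] IS4[OF assms(3)]])
  subgoal by (erule core[OF _ MV5[OF assms(2)] IS5[OF assms(3)]])
  subgoal by (erule core[OF _ MV6[OF assms(2)] IS6[OF assms(3)]])
  subgoal by (erule core[OF _ MV7[OF assms(2)] IS7[OF assms(3)]])
  subgoal by (erule core[OF _ MV8[OF assms(2)] IS8[OF assms(3)]])
  subgoal by (erule core[OF _ MV9[OF assms(2)] IS9[OF assms(3)]])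
  subgoal by (erule core[OF _ MV10[OF assms(2)] IS10[OF assms(3)]])
  subgoal by (erule core[OF _ MV11[OF assms(2)] IS11[OF assms(3)]])
  subgoal by (erule core[OF _ MV12[OF assms(2)] IS12[OF assms(3)]])
  subgoal by (erule core[OF _ MV13[OF assms(2)] IS13[OF assms(3)]])
  done
lemma all7: "(\<forall>j<(7::nat). P j) \<longleftrightarrow> P 0 \<and> P 1 \<and> P 2 \<and> P 3 \<and> P 4 \<and> P 5 \<and> P 6"
  unfolding k7 by blast

lemma len7: "length xs = 7 \<Longrightarrow> \<exists>a b c d e f g. xs = [a,b,c,d,e,f,g]"
  by (simp add: numeral_eq_Suc length_Suc_conv) blast

lemma lm: assumes "legal_move [a,b,c,d,e,f,g] [a',b',c',d',e',f',g']"
  shows "MV a b c d e f g a' b' c' d' e' f' g'"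
proof -
  from assms obtain i where i: "i < 7"
    and out: "\<forall>j<7. j \<notin> window i \<longrightarrow> [a',b',c',d',e',f',g'] ! j = [a,b,c,d,e,f,g] ! j"
    and le: "\<forall>j<7. [a',b',c',d',e',f',g'] ! j \<le> [a,b,c,d,e,f,g] ! j"
    and ne: "[a',b',c',d',e',f',g'] \<noteq> [a,b,c,d,e,f,g]"
    unfolding legal_move_def by blast
  have le7: "a' \<le> a \<and> b' \<le> b \<and> c' \<le> c \<and> d' \<le> d \<and> e' \<le> e \<and> f' \<le> f \<and> g' \<le> g"
    using le by (simp add: all7)
  have sm: "a'+b'+c'+d'+e'+f'+g' < a+b+c+d+e+f+g"
    using ne le7 by auto
  have w: "(e' = e \<and> f' = f \<and> g' = g) \<or> (f' = f \<and> g' = g \<and> a' = a) \<or> (g' = g \<and> a' = a \<and> b' = b) \<or>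
     (a' = a \<and> b' = b \<and> c' = c) \<or> (b' = b \<and> c' = c \<and> d' = d) \<or> (c' = c \<and> d' = d \<and> e' = e) \<or>
     (d' = d \<and> e' = e \<and> f' = f)"
    using i out unfolding k7 win all7 by (elim disjE) simp_all
  show ?thesis unfolding MV_def using le7 sm w by blast
qed

theorem proposition1:
  fixes p p' :: "nat list"
  assumes "is_position p"
    and "in_S p"
    and "legal_move p p'"
  shows "\<not> in_S p'"
proof
  assume h: "in_S p'"
  obtain a b c d e f g where p: "p = [a,b,c,d,e,f,g]"
    using len7[of p] assms(1) unfolding is_position_def by blast
  have "length p' = 7" using assms(3) unfolding legal_move_def by blast
  then obtain a' b' c' d' e' f' g' where p': "p' = [a',b',c',d',e',f',g']"
    using len7[of p'] by blast
  show False
    using main7[of a b c d e f g a' b' c' d' e' f' g'] assms(2,3) h lm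
    unfolding p p' inS_iff by blast
qed

end
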